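(* Let $\{E_i:i\in\Lambda\}$ be a family of commuting projections in a $C^*$-algebra, let $\mathcal A:=C^*(\{E_i:i\in\Lambda\})$, and let $X$ be the spectrum of $\mathcal A$, identifying $\mathcal A$ with $C_0(X)$ via the Gelfand transform. Then $C_0(X;\mathbb Z)$ equals the ring generated by $\{E_i:i\in\Lambda\}$. If moreover the family $\{E_i\}$ is closed under multiplication, then $C_0(X;\mathbb Z)=\operatorname{span}_{\mathbb Z}\{E_i:i\in\Lambda\}$.
   Context: $C_0(X;\mathbb Z)$ denotes the continuous integer-valued functions on $X$ vanishing at infinity. The ring generated by the $E_i$ means the (not necessarily unital) subring generated by them. *)

theory Defs
  imports "HOL-Analysis.Analysis"
begin

text \<open>The carrier is a real Banach
algebra (type class), enriched by a complex scalar multiplication cs extending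
the real one, and an involution adj satisfying the C*-identity.\<close>

definition is_cstar_algebra ::
  "('a::{real_normed_algebra,banach} \<Rightarrow> 'a) \<Rightarrow> (complex \<Rightarrow> 'a \<Rightarrow> 'a) \<Rightarrow> bool" where
  "is_cstar_algebra adj cs \<longleftrightarrow>
     (\<forall>r x. cs (complex_of_real r) x = scaleR r x) \<and>
     (\<forall>a b x. cs (a + b) x = cs a x + cs b x) \<and>
     (\<forall>a x y. cs a (x + y) = cs a x + cs a y) \<and>
     (\<forall>a b x. cs (a * b) x = cs a (cs b x)) \<and>
     (\<forall>a x y. cs a (x * y) = cs a x * y \<and> cs a (x * y) = x * cs a y) \<and>
     (\<forall>a x. norm (cs a x) = cmod a * norm x) \<and>
     (\<forall>x y. adj (x + y) = adj x + adj y) \<and>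
     (\<forall>a x. adj (cs a x) = cs (cnj a) (adj x)) \<and>
     (\<forall>x y. adj (x * y) = adj y * adj x) \<and>
     (\<forall>x. adj (adj x) = x) \<and>
     (\<forall>x. norm (adj x * x) = (norm x)\<^sup>2)"

definition is_projection :: "('a::real_normed_algebra \<Rightarrow> 'a) \<Rightarrow> 'a \<Rightarrow> bool" where
  "is_projection adj p \<longleftrightarrow> adj p = p \<and> p * p = p"

definition is_cstar_subalgebra ::
  "('a::real_normed_algebra \<Rightarrow> 'a) \<Rightarrow> (complex \<Rightarrow> 'a \<Rightarrow> 'a) \<Rightarrow> 'a set \<Rightarrow> bool" where
  "is_cstar_subalgebra adj cs B \<longleftrightarrow>
     closed B \<and> 0 \<in> B \<and>
     (\<forall>x\<in>B. \<forall>y\<in>B. x + y \<in> B \<and> x * y \<in> B) \<and>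
     (\<forall>a. \<forall>x\<in>B. cs a x \<in> B) \<and> (\<forall>x\<in>B. adj x \<in> B)"

definition cstar_gen ::
  "('a::real_normed_algebra \<Rightarrow> 'a) \<Rightarrow> (complex \<Rightarrow> 'a \<Rightarrow> 'a) \<Rightarrow> 'a set \<Rightarrow> 'a set" where
  "cstar_gen adj cs S = \<Inter>{B. is_cstar_subalgebra adj cs B \<and> S \<subseteq> B}"

text \<open>Carrying the product topology of 'a => complex, the subspace topology on this set
is the weak* topology.\<close>
definition characters ::
  "(complex \<Rightarrow> 'a \<Rightarrow> 'a) \<Rightarrow> 'a::real_normed_algebra set \<Rightarrow> ('a \<Rightarrow> complex) set" where
  "characters cs A = {\<phi>.
     (\<forall>x\<in>A. \<forall>y\<in>A. \<phi> (x + y) = \<phi> x + \<phi> y \<and> \<phi> (x * y) = \<phi> x * \<phi> y) \<and>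
     (\<forall>a. \<forall>x\<in>A. \<phi> (cs a x) = a * \<phi> x) \<and>
     (\<exists>x\<in>A. \<phi> x \<noteq> 0) \<and>
     (\<forall>x. x \<notin> A \<longrightarrow> \<phi> x = 0)}"

definition gelfand :: "('a \<Rightarrow> complex) set \<Rightarrow> 'a \<Rightarrow> ('a \<Rightarrow> complex) \<Rightarrow> complex" where
  "gelfand X a = (\<lambda>\<phi>. if \<phi> \<in> X then \<phi> a else 0)"

definition C0_int :: "'b::topological_space set \<Rightarrow> ('b \<Rightarrow> complex) set" where
  "C0_int X = {f. continuous_on X f \<and>
                  (\<forall>e>0. compact {x\<in>X. norm (f x) \<ge> e}) \<and>
                  (\<forall>x\<in>X. f x \<in> \<int>) \<and>
                  (\<forall>x. x \<notin> X \<longrightarrow> f x = 0)}"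

definition ring_gen :: "'a::ring set \<Rightarrow> 'a set" where
  "ring_gen S = \<Inter>{R. S \<subseteq> R \<and> 0 \<in> R \<and>
        (\<forall>x\<in>R. \<forall>y\<in>R. x + y \<in> R \<and> - x \<in> R \<and> x * y \<in> R)}"

definition int_span :: "('i \<Rightarrow> 'a::real_vector) \<Rightarrow> 'i set \<Rightarrow> 'a set" where
  "int_span E I = {\<Sum>i\<in>F. scaleR (real_of_int (c i)) (E i) | F c. finite F \<and> F \<subseteq> I}"

end

theory Submission
  imports Defs
begin

lemma ring_gen_min:
  assumes "S \<subseteq> R" "0 \<in> R" "\<And>x y. x\<in>R \<Longrightarrow> y\<in>R \<Longrightarrow> x + y \<in> R"
    "\<And>x. x\<in>R \<Longrightarrow> -x \<in> R" "\<And>x y. x\<in>R \<Longrightarrow> y\<in>R \<Longrightarrow> x*y \<in> R"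
  shows "ring_gen S \<subseteq> R"
  unfolding ring_gen_def by (rule Inter_lower) (simp add: assms)
lemma ring_gen_base: "S \<subseteq> ring_gen S" unfolding ring_gen_def by (rule Inter_greatest) simp
lemma ring_gen_0: "0 \<in> ring_gen S" unfolding ring_gen_def by simp
lemma ring_gen_add: "x \<in> ring_gen S \<Longrightarrow> y \<in> ring_gen S \<Longrightarrow> x + y \<in> ring_gen S"
  unfolding ring_gen_def by simp
lemma ring_gen_uminus: assumes x: "x \<in> ring_gen S" shows "- x \<in> ring_gen S"
  unfolding ring_gen_def
proof (rule InterI)
  fix R assume R: "R \<in> {R. S \<subseteq> R \<and> 0 \<in> R \<and> (\<forall>x\<in>R. \<forall>y\<in>R. x + y \<in> R \<and> - x \<in> R \<and> x * y \<in> R)}"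
  then have "x \<in> R" using x unfolding ring_gen_def by blast
  moreover have "0 \<in> R" using R by simp
  ultimately show "- x \<in> R" using R by simp
qed
lemma ring_gen_mult: "x \<in> ring_gen S \<Longrightarrow> y \<in> ring_gen S \<Longrightarrow> x * y \<in> ring_gen S"
  unfolding ring_gen_def by simp
lemma ring_gen_diff: "x \<in> ring_gen S \<Longrightarrow> y \<in> ring_gen S \<Longrightarrow> x - y \<in> ring_gen S"
  using ring_gen_add ring_gen_uminus by (metis diff_conv_add_uminus)

lemma ring_gen_scale_nat:
  fixes x :: "'a::real_algebra"
  assumes "x \<in> ring_gen S" shows "real n *\<^sub>R x \<in> ring_gen S"
proof (induction n)
  case 0 then show ?case by (simp add: ring_gen_0)
next
  case (Suc n)
  have "real (Suc n) *\<^sub>R x = x + real n *\<^sub>R x" by (simp add: scaleR_add_left)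
  then show ?case using Suc assms ring_gen_add by metis
qed

lemma ring_gen_scale_int:
  fixes x :: "'a::real_algebra"
  assumes "x \<in> ring_gen S" shows "real_of_int k *\<^sub>R x \<in> ring_gen S"
proof (cases k rule: int_cases)
  case (nonneg n) then show ?thesis using ring_gen_scale_nat[OF assms, of n] by simp
next
  case (neg n)
  have "real_of_int k = - real (Suc n)" using neg by simp
  then have "real_of_int k *\<^sub>R x = - (real (Suc n) *\<^sub>R x)" by (simp only: scaleR_minus_left)
  then show ?thesis using ring_gen_scale_nat[OF assms, of "Suc n"] ring_gen_uminus by metis
qed

lemma ring_gen_sum:
  assumes "finite F" "\<And>i. i \<in> F \<Longrightarrow> g i \<in> ring_gen S"
  shows "sum g F \<in> ring_gen S"
  using assms
proof (induction F rule: finite_induct)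
  case empty then show ?case by (simp add: ring_gen_0)
next
  case (insert a F)
  have "g a \<in> ring_gen S" "sum g F \<in> ring_gen S" using insert by auto
  then show ?case using insert(1,2) by (simp add: ring_gen_add)
qed

primrec pw :: "'a::times \<Rightarrow> nat \<Rightarrow> 'a" where
  "pw y 0 = y" | "pw y (Suc n) = y * pw y n"

lemma norm_pw: "norm (pw (y::'a::real_normed_algebra) n) \<le> norm y ^ Suc n"
proof (induction n)
  case 0 then show ?case by simp
next
  case (Suc n)
  have "norm (pw y (Suc n)) \<le> norm y * norm (pw y n)" by (simp add: norm_mult_ineq)
  also have "\<dots> \<le> norm y * norm y ^ Suc n" using Suc by (simp add: mult_left_mono)
  finally show ?case by simp
qed

locale cst =
  fixes adj :: "'a::{real_normed_algebra,banach} \<Rightarrow> 'a"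
    and cs :: "complex \<Rightarrow> 'a \<Rightarrow> 'a"
    and E :: "'i \<Rightarrow> 'a" and \<Lambda> :: "'i set"
  assumes cstar: "is_cstar_algebra adj cs"
    and proj: "\<forall>i\<in>\<Lambda>. is_projection adj (E i)"
begin

definition "AA = cstar_gen adj cs (E ` \<Lambda>)"
definition "Ch = {\<phi>. (\<forall>x\<in>AA. \<forall>y\<in>AA. \<phi> (x + y) = \<phi> x + \<phi> y \<and> \<phi> (x * y) = \<phi> x * \<phi> y) \<and>
     (\<forall>a. \<forall>x\<in>AA. \<phi> (cs a x) = a * \<phi> x) \<and> (\<forall>x. x \<notin> AA \<longrightarrow> \<phi> x = 0)}"

lemma X_eq: "characters cs AA = {\<phi>\<in>Ch. \<exists>x\<in>AA. \<phi> x \<noteq> 0}"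
  unfolding characters_def Ch_def by auto

lemmas cst_all = cstar[unfolded is_cstar_algebra_def]
lemma cs_real: "cs (complex_of_real r) x = r *\<^sub>R x" using cst_all by metis
lemma cs_add2: "cs a (x + y) = cs a x + cs a y" using cst_all by metis
lemma cs_mult: "cs (a * b) x = cs a (cs b x)" using cst_all by metis
lemma cs_multl: "cs a (x * y) = cs a x * y" using cst_all by metis
lemma cs_multr: "cs a (x * y) = x * cs a y" using cst_all by metis
lemma norm_cs: "norm (cs a x) = cmod a * norm x" using cst_all by metis
lemma adj_add: "adj (x + y) = adj x + adj y" using cst_all by metis
lemma adj_cs: "adj (cs a x) = cs (cnj a) (adj x)" using cst_all by metis
lemma adj_mult: "adj (x * y) = adj y * adj x" using cst_all by metis
lemma adj_adj: "adj (adj x) = x" using cst_all by metis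
lemma cstar_id: "norm (adj x * x) = (norm x)\<^sup>2" using cst_all by metis

lemma cs_0: "cs a 0 = 0" using cs_add2[of a 0 0] by simp
lemma cs_minus: "cs a (- x) = - cs a x"
proof -
  have "cs a x + cs a (-x) = 0" using cs_add2[of a x "-x"] cs_0 by simp
  then show ?thesis by (metis add.inverse_unique)
qed
lemma adj_0: "adj 0 = 0" using adj_add[of 0 0] by simp
lemma adj_scaleR: "adj (r *\<^sub>R x) = r *\<^sub>R adj x"
  using adj_cs[of "complex_of_real r" x] cs_real by simp

lemma norm_adj_ge: "norm x \<le> norm (adj x)"
proof (cases "x = 0")
  case True then show ?thesis by simp
next
  case False
  then have "norm x > 0" by simp
  have "norm x * norm x \<le> norm (adj x) * norm x"
    using cstar_id[of x] norm_mult_ineq[of "adj x" x] by (simp add: power2_eq_square)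
  then show ?thesis using \<open>norm x > 0\<close> by (rule mult_right_le_imp_le)
qed

lemma norm_adj: "norm (adj x) = norm x"
  using norm_adj_ge[of x] norm_adj_ge[of "adj x"] adj_adj by (simp add: antisym)

lemma bl_adj: "bounded_linear adj"
  by (rule bounded_linear_intro[where K=1]) (auto simp: adj_add adj_scaleR norm_adj)

lemma isCont_adj: "isCont adj x"
  using bl_adj by (simp add: linear_continuous_at)


lemma sub_UNIV: "is_cstar_subalgebra adj cs UNIV" by (simp add: is_cstar_subalgebra_def)

lemma AA_sub: "is_cstar_subalgebra adj cs AA"
  unfolding AA_def cstar_gen_def is_cstar_subalgebra_def
  by (intro conjI closed_Inter) blast+

lemma AA_min: "is_cstar_subalgebra adj cs B \<Longrightarrow> E ` \<Lambda> \<subseteq> B \<Longrightarrow> AA \<subseteq> B"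
  unfolding AA_def cstar_gen_def by blast

lemma E_AA: "i \<in> \<Lambda> \<Longrightarrow> E i \<in> AA"
  unfolding AA_def cstar_gen_def by blast

lemma AA_closed: "closed AA" using AA_sub unfolding is_cstar_subalgebra_def by blast
lemma AA_0: "0 \<in> AA" using AA_sub unfolding is_cstar_subalgebra_def by blast
lemma AA_add: "x \<in> AA \<Longrightarrow> y \<in> AA \<Longrightarrow> x + y \<in> AA" using AA_sub unfolding is_cstar_subalgebra_def by blast
lemma AA_mult: "x \<in> AA \<Longrightarrow> y \<in> AA \<Longrightarrow> x * y \<in> AA" using AA_sub unfolding is_cstar_subalgebra_def by blast
lemma AA_cs: "x \<in> AA \<Longrightarrow> cs a x \<in> AA" using AA_sub unfolding is_cstar_subalgebra_def by blast
lemma AA_adj: "x \<in> AA \<Longrightarrow> adj x \<in> AA" using AA_sub unfolding is_cstar_subalgebra_def by blast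
lemma AA_scaleR: "x \<in> AA \<Longrightarrow> r *\<^sub>R x \<in> AA" using AA_cs[of x "complex_of_real r"] cs_real by simp
lemma AA_minus: "x \<in> AA \<Longrightarrow> - x \<in> AA" using AA_scaleR[of x "-1"] by simp
lemma AA_diff: "x \<in> AA \<Longrightarrow> y \<in> AA \<Longrightarrow> x - y \<in> AA" using AA_add AA_minus by (metis diff_conv_add_uminus)
lemma AA_sum: "finite S \<Longrightarrow> (\<And>s. s \<in> S \<Longrightarrow> g s \<in> AA) \<Longrightarrow> sum g S \<in> AA"
  by (induction S rule: finite_induct) (auto intro: AA_0 AA_add)

lemma ring_gen_AA: "ring_gen (E ` \<Lambda>) \<subseteq> AA"
  by (rule ring_gen_min) (auto intro: E_AA AA_0 AA_add AA_minus AA_mult)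

lemma Ch_add: "\<phi> \<in> Ch \<Longrightarrow> x \<in> AA \<Longrightarrow> y \<in> AA \<Longrightarrow> \<phi> (x + y) = \<phi> x + \<phi> y" unfolding Ch_def by blast
lemma Ch_mult: "\<phi> \<in> Ch \<Longrightarrow> x \<in> AA \<Longrightarrow> y \<in> AA \<Longrightarrow> \<phi> (x * y) = \<phi> x * \<phi> y" unfolding Ch_def by blast
lemma Ch_cs: "\<phi> \<in> Ch \<Longrightarrow> x \<in> AA \<Longrightarrow> \<phi> (cs a x) = a * \<phi> x" unfolding Ch_def by blast
lemma Ch_out: "\<phi> \<in> Ch \<Longrightarrow> x \<notin> AA \<Longrightarrow> \<phi> x = 0" unfolding Ch_def by blast
lemma Ch_0: "\<phi> \<in> Ch \<Longrightarrow> \<phi> 0 = 0" using Ch_add[of \<phi> 0 0] AA_0 by simp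
lemma Ch_scaleR: "\<phi> \<in> Ch \<Longrightarrow> x \<in> AA \<Longrightarrow> \<phi> (r *\<^sub>R x) = complex_of_real r * \<phi> x"
  using Ch_cs[of \<phi> x "complex_of_real r"] cs_real by simp
lemma Ch_minus: "\<phi> \<in> Ch \<Longrightarrow> x \<in> AA \<Longrightarrow> \<phi> (- x) = - \<phi> x"
  using Ch_scaleR[of \<phi> x "-1"] by simp
lemma Ch_diff: "\<phi> \<in> Ch \<Longrightarrow> x \<in> AA \<Longrightarrow> y \<in> AA \<Longrightarrow> \<phi> (x - y) = \<phi> x - \<phi> y"
  using Ch_add[of \<phi> x "-y"] Ch_minus[of \<phi> y] AA_minus[of y] by simp
lemma Ch_sum: assumes "\<phi> \<in> Ch" "finite S" "\<And>s. s \<in> S \<Longrightarrow> g s \<in> AA" shows "\<phi> (sum g S) = (\<Sum>s\<in>S. \<phi> (g s))"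
  using assms(2,3)
proof (induction S rule: finite_induct)
  case empty then show ?case by (simp add: Ch_0[OF assms(1)])
next
  case (insert s S)
  then show ?case using Ch_add[OF assms(1), of "g s" "sum g S"] AA_sum[of S g] by simp
qed
lemma zero_Ch: "(\<lambda>_. 0) \<in> Ch" unfolding Ch_def by simp

lemma E_idem: "i \<in> \<Lambda> \<Longrightarrow> E i * E i = E i" using proj unfolding is_projection_def by blast
lemma E_adj: "i \<in> \<Lambda> \<Longrightarrow> adj (E i) = E i" using proj unfolding is_projection_def by blast

lemma Ch_E: "\<phi> \<in> Ch \<Longrightarrow> i \<in> \<Lambda> \<Longrightarrow> \<phi> (E i) = 0 \<or> \<phi> (E i) = 1"
proof -
  assume a: "\<phi> \<in> Ch" "i \<in> \<Lambda>"
  have "\<phi> (E i) = \<phi> (E i) * \<phi> (E i)" using Ch_mult[OF a(1) E_AA E_AA, of i i] E_idem a(2) by simp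
  then have "\<phi> (E i) * (\<phi> (E i) - 1) = 0" by (simp add: algebra_simps)
  then show ?thesis by simp
qed

lemma Ch_norm:
  assumes ph: "\<phi> \<in> Ch" and xA: "x \<in> AA"
  shows "cmod (\<phi> x) \<le> norm x"
proof (rule ccontr)
  assume "\<not> ?thesis"
  then have lt: "norm x < cmod (\<phi> x)" by simp
  then have nz: "\<phi> x \<noteq> 0" using norm_ge_zero[of x] by auto
  define c where "c = 1 / \<phi> x"
  define y where "y = cs c x"
  have yA: "y \<in> AA" unfolding y_def using xA by (rule AA_cs)
  have phy: "\<phi> y = 1" unfolding y_def c_def using Ch_cs[OF ph xA] nz by simp
  have "norm y = norm x / cmod (\<phi> x)" unfolding y_def c_def norm_cs by (simp add: norm_divide)
  then have ny: "norm y < 1" using lt nz by (simp add: divide_less_eq_1_pos)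
  have pwA: "pw y n \<in> AA" for n by (induction n) (auto intro: yA AA_mult)
  have sg: "summable (\<lambda>n. norm y ^ Suc n)"
    using summable_mult[OF summable_geometric[of "norm y"], of "norm y"] ny by simp
  have sm: "summable (pw y)"
    by (rule summable_comparison_test[OF _ sg]) (intro exI[of _ 0] allI impI, metis norm_pw)
  define s where "s = suminf (pw y)"
  have "(\<lambda>n. \<Sum>i<n. pw y i) \<longlonglongrightarrow> s" unfolding s_def using sm by (rule summable_LIMSEQ)
  moreover have "\<And>n. (\<Sum>i<n. pw y i) \<in> AA" by (rule AA_sum) (auto intro: pwA)
  ultimately have sA: "s \<in> AA" by (rule closed_sequentially[OF AA_closed, rotated])
  have "y * s = (\<Sum>n. y * pw y n)" unfolding s_def using suminf_mult[OF sm, of y] by simp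
  also have "\<dots> = (\<Sum>n. pw y (Suc n))" by simp
  also have "\<dots> = s - y" unfolding s_def using suminf_split_head[OF sm] by simp
  finally have "s = y + y * s" by simp
  then have "\<phi> s = \<phi> y + \<phi> y * \<phi> s"
    using Ch_add[OF ph yA AA_mult[OF yA sA]] Ch_mult[OF ph yA sA] by simp
  then show False using phy by simp
qed

lemma Ch_lip: "\<phi> \<in> Ch \<Longrightarrow> x \<in> AA \<Longrightarrow> y \<in> AA \<Longrightarrow> cmod (\<phi> x - \<phi> y) \<le> norm (x - y)"
  using Ch_norm[of \<phi> "x - y"] Ch_diff[of \<phi> x y] AA_diff[of x y] by simp


definition "good x e F \<longleftrightarrow> finite F \<and> F \<subseteq> \<Lambda> \<and>
   (\<forall>\<phi>\<in>Ch. \<forall>\<psi>\<in>Ch. (\<forall>i\<in>F. \<phi> (E i) = \<psi> (E i)) \<longrightarrow> cmod (\<phi> x - \<psi> x) \<le> e)"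
definition "G = {x\<in>AA. \<forall>e>0. \<exists>F. good x e F}"

lemma G_AA: "x \<in> G \<Longrightarrow> x \<in> AA" unfolding G_def by blast
lemma G_D: "x \<in> G \<Longrightarrow> e > 0 \<Longrightarrow> \<exists>F. good x e F" unfolding G_def by blast
lemma G_I: "x \<in> AA \<Longrightarrow> (\<And>e. e > 0 \<Longrightarrow> \<exists>F. good x e F) \<Longrightarrow> x \<in> G" unfolding G_def by blast

lemma G_closed: "closed G"
  unfolding closed_limpt
proof (intro allI impI)
  fix x assume lx: "x islimpt G"
  have "G \<subseteq> AA" using G_AA by blast
  then have "x islimpt AA" using lx islimpt_subset by blast
  then have xA: "x \<in> AA" using AA_closed closed_limpt by blast
  show "x \<in> G"
  proof (rule G_I[OF xA])
    fix e :: real assume e: "e > 0"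
    then have e3: "e/3 > 0" by simp
    obtain x' where x': "x' \<in> G" "dist x' x < e/3" using lx e3 islimpt_approachable[of x G] by blast
    have x'A: "x' \<in> AA" using x'(1) G_AA by blast
    obtain F where F: "good x' (e/3) F" using G_D[OF x'(1) e3] by blast
    show "\<exists>F. good x e F" unfolding good_def
    proof (intro exI[of _ F] conjI ballI impI)
      show "finite F" "F \<subseteq> \<Lambda>" using F unfolding good_def by auto
      fix \<phi> \<psi> assume ph: "\<phi> \<in> Ch" and ps: "\<psi> \<in> Ch" and ag: "\<forall>i\<in>F. \<phi> (E i) = \<psi> (E i)"
      have nx: "norm (x - x') < e/3" using x'(2) by (simp add: dist_norm norm_minus_commute)
      have 1: "cmod (\<phi> x - \<phi> x') \<le> e/3" using Ch_lip[OF ph xA x'A] nx by simp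
      have 2: "cmod (\<phi> x' - \<psi> x') \<le> e/3" using F ph ps ag unfolding good_def by blast
      have 3: "cmod (\<psi> x' - \<psi> x) \<le> e/3" using Ch_lip[OF ps x'A xA] nx by (simp add: norm_minus_commute)
      have "cmod (\<phi> x - \<psi> x') \<le> e/3 + e/3" by (rule norm_diff_triangle_le[OF 1 2])
      then have "cmod (\<phi> x - \<psi> x) \<le> (e/3 + e/3) + e/3" by (rule norm_diff_triangle_le[OF _ 3])
      then show "cmod (\<phi> x - \<psi> x) \<le> e" by simp
    qed
  qed
qed

lemma G_0: "0 \<in> G"
  by (rule G_I[OF AA_0]) (auto simp: good_def Ch_0 intro: exI[of _ "{}"])

lemma G_E: "i \<in> \<Lambda> \<Longrightarrow> E i \<in> G"
  by (rule G_I[OF E_AA]) (auto simp: good_def intro!: exI[of _ "{i}"])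

lemma G_add:
  assumes x: "x \<in> G" and y: "y \<in> G" shows "x + y \<in> G"
proof (rule G_I)
  show "x + y \<in> AA" using x y G_AA AA_add by blast
  fix e :: real assume e: "e > 0"
  obtain F1 where F1: "good x (e/2) F1" using G_D[OF x] e by (meson half_gt_zero)
  obtain F2 where F2: "good y (e/2) F2" using G_D[OF y] e by (meson half_gt_zero)
  show "\<exists>F. good (x + y) e F" unfolding good_def
  proof (intro exI[of _ "F1 \<union> F2"] conjI ballI impI)
    show "finite (F1 \<union> F2)" "F1 \<union> F2 \<subseteq> \<Lambda>" using F1 F2 unfolding good_def by auto
    fix \<phi> \<psi> assume ph: "\<phi> \<in> Ch" and ps: "\<psi> \<in> Ch" and ag: "\<forall>i\<in>F1 \<union> F2. \<phi> (E i) = \<psi> (E i)"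
    have 1: "cmod (\<phi> x - \<psi> x) \<le> e/2" using F1 ph ps ag unfolding good_def by blast
    have 2: "cmod (\<phi> y - \<psi> y) \<le> e/2" using F2 ph ps ag unfolding good_def by blast
    have "\<phi> (x + y) - \<psi> (x + y) = (\<phi> x - \<psi> x) + (\<phi> y - \<psi> y)"
      using Ch_add[OF ph G_AA[OF x] G_AA[OF y]] Ch_add[OF ps G_AA[OF x] G_AA[OF y]] by simp
    then have "cmod (\<phi> (x + y) - \<psi> (x + y)) \<le> cmod (\<phi> x - \<psi> x) + cmod (\<phi> y - \<psi> y)"
      by (simp add: norm_triangle_ineq)
    then show "cmod (\<phi> (x + y) - \<psi> (x + y)) \<le> e" using 1 2 by simp
  qed
qed

lemma G_mult:
  assumes x: "x \<in> G" and y: "y \<in> G" shows "x * y \<in> G"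
proof (rule G_I)
  have xA: "x \<in> AA" and yA: "y \<in> AA" using x y G_AA by auto
  show "x * y \<in> AA" using xA yA AA_mult by blast
  fix e :: real assume e: "e > 0"
  define d where "d = e / (norm x + norm y + 1)"
  have dpos: "d > 0" unfolding d_def using e by (simp add: add_nonneg_pos)
  have de: "(norm x + norm y) * d \<le> e"
  proof -
    have "norm x + norm y + 1 \<noteq> 0" using norm_ge_zero[of x] norm_ge_zero[of y] by linarith
    then have "(norm x + norm y + 1) * d = e" unfolding d_def by simp
    then show ?thesis using dpos by (simp add: algebra_simps)
  qed
  obtain F1 where F1: "good x d F1" using G_D[OF x dpos] by blast
  obtain F2 where F2: "good y d F2" using G_D[OF y dpos] by blast
  show "\<exists>F. good (x * y) e F" unfolding good_def
  proof (intro exI[of _ "F1 \<union> F2"] conjI ballI impI)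
    show "finite (F1 \<union> F2)" "F1 \<union> F2 \<subseteq> \<Lambda>" using F1 F2 unfolding good_def by auto
    fix \<phi> \<psi> assume ph: "\<phi> \<in> Ch" and ps: "\<psi> \<in> Ch" and ag: "\<forall>i\<in>F1 \<union> F2. \<phi> (E i) = \<psi> (E i)"
    have 1: "cmod (\<phi> x - \<psi> x) \<le> d" using F1 ph ps ag unfolding good_def by blast
    have 2: "cmod (\<phi> y - \<psi> y) \<le> d" using F2 ph ps ag unfolding good_def by blast
    have "\<phi> (x * y) - \<psi> (x * y) = \<phi> x * (\<phi> y - \<psi> y) + (\<phi> x - \<psi> x) * \<psi> y"
      using Ch_mult[OF ph xA yA] Ch_mult[OF ps xA yA] by (simp add: algebra_simps)
    then have "cmod (\<phi> (x * y) - \<psi> (x * y)) \<le> cmod (\<phi> x) * cmod (\<phi> y - \<psi> y) + cmod (\<phi> x - \<psi> x) * cmod (\<psi> y)"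
      by (metis norm_mult norm_triangle_ineq)
    also have "\<dots> \<le> norm x * d + d * norm y"
      using Ch_norm[OF ph xA] Ch_norm[OF ps yA] 1 2 dpos
      by (intro add_mono mult_mono) auto
    also have "\<dots> \<le> e" using de by (simp add: algebra_simps)
    finally show "cmod (\<phi> (x * y) - \<psi> (x * y)) \<le> e" .
  qed
qed

lemma G_cs:
  assumes x: "x \<in> G" shows "cs a x \<in> G"
proof (rule G_I)
  have xA: "x \<in> AA" using x G_AA by auto
  show "cs a x \<in> AA" using xA AA_cs by blast
  fix e :: real assume e: "e > 0"
  define d where "d = e / (cmod a + 1)"
  have dpos: "d > 0" unfolding d_def using e by (simp add: add_nonneg_pos)
  have de: "cmod a * d \<le> e"
  proof -
    have "cmod a + 1 \<noteq> 0" using norm_ge_zero[of a] by linarith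
    then have "(cmod a + 1) * d = e" unfolding d_def by simp
    then show ?thesis using dpos by (simp add: algebra_simps)
  qed
  obtain F1 where F1: "good x d F1" using G_D[OF x dpos] by blast
  show "\<exists>F. good (cs a x) e F" unfolding good_def
  proof (intro exI[of _ "F1"] conjI ballI impI)
    show "finite F1" "F1 \<subseteq> \<Lambda>" using F1 unfolding good_def by auto
    fix \<phi> \<psi> assume ph: "\<phi> \<in> Ch" and ps: "\<psi> \<in> Ch" and ag: "\<forall>i\<in>F1. \<phi> (E i) = \<psi> (E i)"
    have 1: "cmod (\<phi> x - \<psi> x) \<le> d" using F1 ph ps ag unfolding good_def by blast
    have "\<phi> (cs a x) - \<psi> (cs a x) = a * (\<phi> x - \<psi> x)"
      using Ch_cs[OF ph xA] Ch_cs[OF ps xA] by (simp add: algebra_simps)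
    then have "cmod (\<phi> (cs a x) - \<psi> (cs a x)) = cmod a * cmod (\<phi> x - \<psi> x)" by (simp add: norm_mult)
    also have "\<dots> \<le> cmod a * d" using 1 by (simp add: mult_left_mono)
    finally show "cmod (\<phi> (cs a x) - \<psi> (cs a x)) \<le> e" using de by simp
  qed
qed

definition "G2 = {x\<in>G. adj x \<in> G}"

lemma G2_sub: "is_cstar_subalgebra adj cs G2"
  unfolding is_cstar_subalgebra_def
proof (intro conjI ballI allI)
  have "G2 = G \<inter> adj -` G" unfolding G2_def by auto
  then show "closed G2" using G_closed continuous_closed_vimage[OF G_closed isCont_adj] by (simp add: closed_Int)
  show "0 \<in> G2" unfolding G2_def using G_0 adj_0 by simp
  fix x y assume x: "x \<in> G2" and y: "y \<in> G2"
  show "x + y \<in> G2" using x y unfolding G2_def by (auto simp: adj_add intro: G_add)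
  show "x * y \<in> G2" using x y unfolding G2_def by (auto simp: adj_mult intro: G_mult)
next
  fix a x assume x: "x \<in> G2"
  show "cs a x \<in> G2" using x unfolding G2_def by (auto simp: adj_cs intro: G_cs)
next
  fix x assume x: "x \<in> G2"
  show "adj x \<in> G2" using x unfolding G2_def by (auto simp: adj_adj)
qed

lemma AA_G: "x \<in> AA \<Longrightarrow> x \<in> G"
proof -
  assume "x \<in> AA"
  moreover have "AA \<subseteq> G2" by (rule AA_min[OF G2_sub]) (auto simp: G2_def E_adj G_E)
  ultimately show "x \<in> G" unfolding G2_def by blast
qed

lemma has_one:
  assumes ph: "\<phi> \<in> Ch" and xA: "x \<in> AA" and nz: "\<phi> x \<noteq> 0"
  shows "\<exists>i\<in>\<Lambda>. \<phi> (E i) = 1"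
proof (rule ccontr)
  assume "\<not> ?thesis"
  then have z: "\<forall>i\<in>\<Lambda>. \<phi> (E i) = 0" using Ch_E[OF ph] by blast
  have e: "cmod (\<phi> x) / 2 > 0" using nz by simp
  obtain F where F: "good x (cmod (\<phi> x) / 2) F" using G_D[OF AA_G[OF xA] e] by blast
  have "cmod (\<phi> x - 0) \<le> cmod (\<phi> x) / 2"
    using F ph zero_Ch z unfolding good_def by (metis subsetD)
  then show False using nz by simp
qed

lemma nbhd:
  assumes ph: "\<phi> \<in> Ch" and Oo: "open Oo" and phO: "\<phi> \<in> Oo"
  shows "\<exists>F. finite F \<and> F \<subseteq> \<Lambda> \<and> (\<forall>\<psi>\<in>Ch. (\<forall>i\<in>F. \<psi> (E i) = \<phi> (E i)) \<longrightarrow> \<psi> \<in> Oo)"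
proof -
  have "openin (product_topology (\<lambda>i. euclidean) UNIV) Oo" using Oo unfolding open_fun_def .
  from product_topology_open_contains_basis[OF this phO]
  have "\<exists>X. \<phi> \<in> PiE UNIV X \<and> (\<forall>i. open (X i)) \<and> finite {i. X i \<noteq> UNIV} \<and> PiE UNIV X \<subseteq> Oo"
    by simp
  then obtain Xs where XX: "\<phi> \<in> PiE UNIV Xs \<and> (\<forall>i. open (Xs i)) \<and> finite {i. Xs i \<noteq> UNIV} \<and> PiE UNIV Xs \<subseteq> Oo"
    by (rule exE)
  have Xs1: "\<phi> \<in> PiE UNIV Xs" and Xs2: "\<And>i. open (Xs i)" and Xs3: "finite {i. Xs i \<noteq> UNIV}"
    and Xs4: "PiE UNIV Xs \<subseteq> Oo" using XX by simp_all
  define J where "J = {i. Xs i \<noteq> UNIV}"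
  have Jf: "finite J" unfolding J_def by (rule Xs3)
  have "\<forall>y\<in>J. \<exists>F. finite F \<and> F \<subseteq> \<Lambda> \<and> (\<forall>\<psi>\<in>Ch. (\<forall>i\<in>F. \<psi> (E i) = \<phi> (E i)) \<longrightarrow> \<psi> y \<in> Xs y)"
  proof
    fix y
    have phy: "\<phi> y \<in> Xs y" using Xs1 by (simp add: PiE_iff)
    have "\<exists>\<epsilon>>0. ball (\<phi> y) \<epsilon> \<subseteq> Xs y" using open_contains_ball_eq[OF Xs2[of y], of "\<phi> y"] phy by simp
    then obtain r where r: "r > 0" "ball (\<phi> y) r \<subseteq> Xs y" by blast
    show "\<exists>F. finite F \<and> F \<subseteq> \<Lambda> \<and> (\<forall>\<psi>\<in>Ch. (\<forall>i\<in>F. \<psi> (E i) = \<phi> (E i)) \<longrightarrow> \<psi> y \<in> Xs y)"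
    proof (cases "y \<in> AA")
      case True
      have r2: "r/2 > 0" using r by simp
      obtain F where F: "good y (r/2) F" using G_D[OF AA_G[OF True] r2] by (elim exE)
      show ?thesis
      proof (intro exI[of _ F] conjI ballI impI)
        show "finite F" "F \<subseteq> \<Lambda>" using F unfolding good_def by simp_all
        fix \<psi> assume ps: "\<psi> \<in> Ch" and ag: "\<forall>i\<in>F. \<psi> (E i) = \<phi> (E i)"
        have ag': "\<forall>i\<in>F. \<phi> (E i) = \<psi> (E i)" using ag by simp
        have "cmod (\<phi> y - \<psi> y) \<le> r/2" using F ph ps ag' unfolding good_def by simp
        then have "\<psi> y \<in> ball (\<phi> y) r" using r by (simp add: dist_norm)
        then show "\<psi> y \<in> Xs y" using r(2) by (rule subsetD[rotated])
      qed
    next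
      case False
      show ?thesis
      proof (intro exI[of _ "{}"] conjI ballI impI)
        fix \<psi> assume ps: "\<psi> \<in> Ch"
        have "\<psi> y = \<phi> y" using Ch_out[OF ps False] Ch_out[OF ph False] by simp
        then show "\<psi> y \<in> Xs y" using phy by simp
      qed simp_all
    qed
  qed
  then have "\<exists>f. \<forall>y\<in>J. finite (f y) \<and> f y \<subseteq> \<Lambda> \<and> (\<forall>\<psi>\<in>Ch. (\<forall>i\<in>f y. \<psi> (E i) = \<phi> (E i)) \<longrightarrow> \<psi> y \<in> Xs y)"
    by (rule finite_set_choice[OF Jf])
  then obtain f where f: "\<forall>y\<in>J. finite (f y) \<and> f y \<subseteq> \<Lambda> \<and> (\<forall>\<psi>\<in>Ch. (\<forall>i\<in>f y. \<psi> (E i) = \<phi> (E i)) \<longrightarrow> \<psi> y \<in> Xs y)"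
    by (elim exE)
  show ?thesis
  proof (intro exI[of _ "\<Union>(f ` J)"] conjI ballI impI)
    show "finite (\<Union>(f ` J))" using f Jf by simp
    show "\<Union>(f ` J) \<subseteq> \<Lambda>" using f by (simp add: UN_subset_iff)
    fix \<psi> assume ps: "\<psi> \<in> Ch" and ag: "\<forall>i\<in>\<Union>(f ` J). \<psi> (E i) = \<phi> (E i)"
    have "\<psi> y \<in> Xs y" for y
    proof (cases "y \<in> J")
      case True
      then have "\<forall>i\<in>f y. \<psi> (E i) = \<phi> (E i)" using ag by simp
      then show ?thesis using f True ps by simp
    next
      case False then show ?thesis unfolding J_def by simp
    qed
    then have "\<psi> \<in> PiE UNIV Xs" by (simp add: PiE_iff)
    then show "\<psi> \<in> Oo" using Xs4 by (rule subsetD[rotated])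
  qed
qed

lemma cyl:
  assumes "finite F" "F \<subseteq> \<Lambda>" "i0 \<in> \<Lambda>" "\<forall>i\<in>F. v i = 0 \<or> v i = 1"
  shows "\<exists>r\<in>ring_gen (E`\<Lambda>). \<forall>\<psi>\<in>Ch. \<psi> r = (if \<psi> (E i0) = 1 \<and> (\<forall>i\<in>F. \<psi> (E i) = v i) then 1 else 0)"
  using assms
proof (induction F rule: finite_induct)
  case empty
  have Ei0: "E i0 \<in> ring_gen (E`\<Lambda>)" by (rule subsetD[OF ring_gen_base imageI[OF empty(2)]])
  have *: "\<psi> (E i0) = (if \<psi> (E i0) = 1 \<and> (\<forall>i\<in>{}. \<psi> (E i) = v i) then 1 else 0)" if ps: "\<psi> \<in> Ch" for \<psi>
  proof -
    have "\<psi> (E i0) = 0 \<or> \<psi> (E i0) = 1" by (rule Ch_E[OF ps empty(2)])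
    then show ?thesis by (cases "\<psi> (E i0) = 1") simp_all
  qed
  show ?case using Ei0 * by blast
next
  case (insert j F)
  have IH: "\<exists>r\<in>ring_gen (E`\<Lambda>). \<forall>\<psi>\<in>Ch. \<psi> r = (if \<psi> (E i0) = 1 \<and> (\<forall>i\<in>F. \<psi> (E i) = v i) then 1 else 0)"
    using insert.IH insert.prems by simp
  then obtain r where r1: "r \<in> ring_gen (E`\<Lambda>)"
    and r2: "\<And>\<psi>. \<psi> \<in> Ch \<Longrightarrow> \<psi> r = (if \<psi> (E i0) = 1 \<and> (\<forall>i\<in>F. \<psi> (E i) = v i) then 1 else 0)" by blast
  have j: "j \<in> \<Lambda>" using insert.prems by simp
  have vj01: "v j = 0 \<or> v j = 1" using insert.prems by simp
  have rA: "r \<in> AA" using r1 ring_gen_AA by blast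
  have Ej: "E j \<in> ring_gen (E`\<Lambda>)" by (rule subsetD[OF ring_gen_base imageI[OF j]])
  have ins: "(\<forall>i\<in>insert j F. \<psi> (E i) = v i) = (\<psi> (E j) = v j \<and> (\<forall>i\<in>F. \<psi> (E i) = v i))" for \<psi>
    by simp
  show ?case
  proof (cases "v j = 1")
    case True
    show ?thesis
    proof (intro bexI[of _ "r * E j"] ballI)
      show "r * E j \<in> ring_gen (E`\<Lambda>)" using r1 Ej by (rule ring_gen_mult)
      fix \<psi> assume ps: "\<psi> \<in> Ch"
      have m: "\<psi> (r * E j) = \<psi> r * \<psi> (E j)" using Ch_mult[OF ps rA E_AA[OF j]] .
      have c: "\<psi> (E j) = 0 \<or> \<psi> (E j) = 1" by (rule Ch_E[OF ps j])
      show "\<psi> (r * E j) = (if \<psi> (E i0) = 1 \<and> (\<forall>i\<in>insert j F. \<psi> (E i) = v i) then 1 else 0)"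
        unfolding m ins r2[OF ps] using c True by (cases "\<psi> (E i0) = 1 \<and> (\<forall>i\<in>F. \<psi> (E i) = v i)") auto
    qed
  next
    case False
    then have vj: "v j = 0" using vj01 by simp
    show ?thesis
    proof (intro bexI[of _ "r - r * E j"] ballI)
      show "r - r * E j \<in> ring_gen (E`\<Lambda>)" using r1 ring_gen_mult[OF r1 Ej] by (rule ring_gen_diff)
      fix \<psi> assume ps: "\<psi> \<in> Ch"
      have m: "\<psi> (r - r * E j) = \<psi> r - \<psi> r * \<psi> (E j)"
        using Ch_mult[OF ps rA E_AA[OF j]] Ch_diff[OF ps rA AA_mult[OF rA E_AA[OF j]]] by simp
      have c: "\<psi> (E j) = 0 \<or> \<psi> (E j) = 1" by (rule Ch_E[OF ps j])
      show "\<psi> (r - r * E j) = (if \<psi> (E i0) = 1 \<and> (\<forall>i\<in>insert j F. \<psi> (E i) = v i) then 1 else 0)"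
        unfolding m ins r2[OF ps] using c vj by (cases "\<psi> (E i0) = 1 \<and> (\<forall>i\<in>F. \<psi> (E i) = v i)") auto
    qed
  qed
qed

definition "XX = characters cs AA"
definition "rep W \<longleftrightarrow> (\<exists>r\<in>ring_gen (E`\<Lambda>). \<forall>\<psi>\<in>XX. \<psi> r = (if \<psi> \<in> W then 1 else 0))"

lemma XX_Ch: "\<psi> \<in> XX \<Longrightarrow> \<psi> \<in> Ch" unfolding XX_def X_eq by blast

lemma rep_empty: "rep {}"
  unfolding rep_def using ring_gen_0 XX_Ch Ch_0 by fastforce

lemma rep_Un:
  assumes "rep W1" "rep W2" shows "rep (W1 \<union> W2)"
proof -
  obtain r1 where r1: "r1 \<in> ring_gen (E`\<Lambda>)" "\<forall>\<psi>\<in>XX. \<psi> r1 = (if \<psi> \<in> W1 then 1 else 0)"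
    using assms(1) unfolding rep_def by blast
  obtain r2 where r2: "r2 \<in> ring_gen (E`\<Lambda>)" "\<forall>\<psi>\<in>XX. \<psi> r2 = (if \<psi> \<in> W2 then 1 else 0)"
    using assms(2) unfolding rep_def by blast
  have A1: "r1 \<in> AA" and A2: "r2 \<in> AA" using r1 r2 ring_gen_AA by auto
  show ?thesis unfolding rep_def
  proof (intro bexI[of _ "r1 + r2 - r1 * r2"] ballI)
    show "r1 + r2 - r1 * r2 \<in> ring_gen (E`\<Lambda>)"
      using r1 r2 ring_gen_add ring_gen_mult ring_gen_diff by blast
    fix \<psi> assume ps: "\<psi> \<in> XX"
    then have ps': "\<psi> \<in> Ch" by (rule XX_Ch)
    have "\<psi> (r1 + r2 - r1 * r2) = \<psi> r1 + \<psi> r2 - \<psi> r1 * \<psi> r2"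
      using Ch_diff[OF ps' AA_add[OF A1 A2] AA_mult[OF A1 A2]] Ch_add[OF ps' A1 A2] Ch_mult[OF ps' A1 A2]
      by simp
    moreover have "\<psi> r1 = (if \<psi> \<in> W1 then 1 else 0)" by (rule bspec[OF r1(2) ps])
    moreover have "\<psi> r2 = (if \<psi> \<in> W2 then 1 else 0)" by (rule bspec[OF r2(2) ps])
    ultimately show "\<psi> (r1 + r2 - r1 * r2) = (if \<psi> \<in> W1 \<union> W2 then 1 else 0)"
      by (cases "\<psi> \<in> W1"; cases "\<psi> \<in> W2") simp_all
  qed
qed

lemma rep_UN: "finite C \<Longrightarrow> (\<And>c. c \<in> C \<Longrightarrow> rep (W c)) \<Longrightarrow> rep (\<Union>c\<in>C. W c)"
  by (induction C rule: finite_induct) (auto intro: rep_empty rep_Un)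

lemma zo_eq: "(a::complex) = 0 \<or> a = 1 \<Longrightarrow> b = 0 \<or> b = 1 \<Longrightarrow> dist a b < 1/2 \<Longrightarrow> a = b"
  by auto

lemma rep_compact_open:
  assumes KX: "K \<subseteq> XX" and Kc: "compact K" and Oo: "open Oo" and KO: "K = XX \<inter> Oo"
  shows "rep K"
proof -
  have "\<forall>\<phi>\<in>K. \<exists>i0 F. i0 \<in> \<Lambda> \<and> \<phi> (E i0) = 1 \<and> finite F \<and> F \<subseteq> \<Lambda> \<and>
          (\<forall>\<psi>\<in>Ch. (\<forall>i\<in>F. \<psi> (E i) = \<phi> (E i)) \<longrightarrow> \<psi> \<in> Oo)"
  proof
    fix \<phi> assume phK: "\<phi> \<in> K"
    then have phX: "\<phi> \<in> XX" using KX by blast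
    then have ph: "\<phi> \<in> Ch" by (rule XX_Ch)
    obtain x where "x \<in> AA" "\<phi> x \<noteq> 0" using phX unfolding XX_def X_eq by blast
    then obtain i0 where "i0 \<in> \<Lambda>" "\<phi> (E i0) = 1" using has_one[OF ph] by blast
    moreover obtain F where "finite F \<and> F \<subseteq> \<Lambda> \<and> (\<forall>\<psi>\<in>Ch. (\<forall>i\<in>F. \<psi> (E i) = \<phi> (E i)) \<longrightarrow> \<psi> \<in> Oo)"
      using nbhd[OF ph Oo] phK KO by blast
    ultimately show "\<exists>i0 F. i0 \<in> \<Lambda> \<and> \<phi> (E i0) = 1 \<and> finite F \<and> F \<subseteq> \<Lambda> \<and>
          (\<forall>\<psi>\<in>Ch. (\<forall>i\<in>F. \<psi> (E i) = \<phi> (E i)) \<longrightarrow> \<psi> \<in> Oo)" by blast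
  qed
  then obtain I0 FF where H: "\<And>\<phi>. \<phi> \<in> K \<Longrightarrow> I0 \<phi> \<in> \<Lambda> \<and> \<phi> (E (I0 \<phi>)) = 1 \<and> finite (FF \<phi>) \<and> FF \<phi> \<subseteq> \<Lambda> \<and>
          (\<forall>\<psi>\<in>Ch. (\<forall>i\<in>FF \<phi>. \<psi> (E i) = \<phi> (E i)) \<longrightarrow> \<psi> \<in> Oo)"
    by metis
  define N where "N \<phi> = {\<psi>. \<forall>i\<in>insert (I0 \<phi>) (FF \<phi>). \<psi> (E i) \<in> ball (\<phi> (E i)) (1/2)}" for \<phi>
  define W where "W \<phi> = {\<psi>\<in>XX. \<psi> (E (I0 \<phi>)) = 1 \<and> (\<forall>i\<in>FF \<phi>. \<psi> (E i) = \<phi> (E i))}" for \<phi>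
  have Nopen: "open (N \<phi>)" if "\<phi> \<in> K" for \<phi>
    unfolding N_def using H[OF that] by (intro product_topology_basis') auto
  have Ncov: "K \<subseteq> \<Union>(N ` K)"
    unfolding N_def by auto
  obtain C' where C': "C' \<subseteq> K" "finite C'" "K \<subseteq> \<Union>(N ` C')"
    using compactE_image[OF Kc Nopen Ncov] by blast
  have KW: "K = (\<Union>\<phi>\<in>C'. W \<phi>)"
  proof
    show "K \<subseteq> (\<Union>\<phi>\<in>C'. W \<phi>)"
    proof
      fix \<psi> assume psK: "\<psi> \<in> K"
      then obtain \<phi> where phC: "\<phi> \<in> C'" and psN: "\<psi> \<in> N \<phi>" using C'(3) by blast
      have phK: "\<phi> \<in> K" using phC C'(1) by blast
      have ph: "\<phi> \<in> Ch" using phK KX XX_Ch by blast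
      have ps: "\<psi> \<in> Ch" and psX: "\<psi> \<in> XX" using psK KX XX_Ch by blast+
      have eq: "\<psi> (E i) = \<phi> (E i)" if "i \<in> insert (I0 \<phi>) (FF \<phi>)" for i
      proof -
        have i: "i \<in> \<Lambda>" using that H[OF phK] by auto
        have "dist (\<phi> (E i)) (\<psi> (E i)) < 1/2" using psN that unfolding N_def by auto
        then show ?thesis using zo_eq[OF Ch_E[OF ps i] Ch_E[OF ph i]] by (simp add: dist_commute)
      qed
      then have "\<psi> \<in> W \<phi>" unfolding W_def using psX H[OF phK] by auto
      then show "\<psi> \<in> (\<Union>\<phi>\<in>C'. W \<phi>)" using phC by blast
    qed
  next
    show "(\<Union>\<phi>\<in>C'. W \<phi>) \<subseteq> K"
    proof
      fix \<psi> assume "\<psi> \<in> (\<Union>\<phi>\<in>C'. W \<phi>)"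
      then obtain \<phi> where phC: "\<phi> \<in> C'" and psW: "\<psi> \<in> W \<phi>" by blast
      have phK: "\<phi> \<in> K" using phC C'(1) by blast
      have psX: "\<psi> \<in> XX" using psW unfolding W_def by blast
      then have "\<psi> \<in> Oo" using H[OF phK] XX_Ch psW unfolding W_def by blast
      then show "\<psi> \<in> K" using KO psX by blast
    qed
  qed
  have "rep (W \<phi>)" if phC: "\<phi> \<in> C'" for \<phi>
  proof -
    have phK: "\<phi> \<in> K" using phC C'(1) by blast
    have ph: "\<phi> \<in> Ch" using phK KX XX_Ch by blast
    have "\<forall>i\<in>FF \<phi>. \<phi> (E i) = 0 \<or> \<phi> (E i) = 1" using H[OF phK] Ch_E[OF ph] by blast
    then obtain r where r: "r \<in> ring_gen (E`\<Lambda>)"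
      "\<forall>\<psi>\<in>Ch. \<psi> r = (if \<psi> (E (I0 \<phi>)) = 1 \<and> (\<forall>i\<in>FF \<phi>. \<psi> (E i) = \<phi> (E i)) then 1 else 0)"
      using cyl[of "FF \<phi>" "I0 \<phi>" "\<lambda>i. \<phi> (E i)"] H[OF phK] by blast
    show ?thesis unfolding rep_def
      using r XX_Ch unfolding W_def by (intro bexI[of _ r]) auto
  qed
  then show ?thesis unfolding KW using rep_UN[OF C'(2)] by blast
qed


lemma int_dist: "k \<noteq> m \<Longrightarrow> dist (of_int k :: complex) (of_int m) \<ge> 1"
proof -
  assume "k \<noteq> m"
  then have "1 \<le> \<bar>real_of_int (k - m)\<bar>" by linarith
  moreover have "dist (of_int k :: complex) (of_int m) = \<bar>real_of_int (k - m)\<bar>"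
    unfolding dist_norm by (metis norm_of_int of_int_diff)
  ultimately show ?thesis by simp
qed

lemma C0_sub:
  assumes f: "f \<in> C0_int XX"
  shows "f \<in> gelfand XX ` ring_gen (E`\<Lambda>)"
proof -
  have cont: "continuous_on XX f" and cpt: "\<And>e. e > 0 \<Longrightarrow> compact {x\<in>XX. norm (f x) \<ge> e}"
    and int: "\<And>x. x \<in> XX \<Longrightarrow> f x \<in> \<int>" and out: "\<And>x. x \<notin> XX \<Longrightarrow> f x = 0"
    using f unfolding C0_int_def by auto
  define K1 where "K1 = {x\<in>XX. norm (f x) \<ge> 1/2}"
  have K1c: "compact K1" unfolding K1_def by (rule cpt) simp
  have "compact (f ` K1)"
    by (rule compact_continuous_image[OF continuous_on_subset[OF cont] K1c]) (auto simp: K1_def)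
  then obtain B where B: "\<And>z. z \<in> f ` K1 \<Longrightarrow> norm z \<le> B"
    using compact_imp_bounded bounded_iff by metis
  define N where "N = {k::int. k \<noteq> 0 \<and> of_int k \<in> f ` XX}"
  have normk: "norm (of_int k :: complex) = \<bar>real_of_int k\<bar>" for k
    by (metis norm_of_int)
  have "N \<subseteq> {-\<lceil>B\<rceil>..\<lceil>B\<rceil>}"
  proof
    fix k assume "k \<in> N"
    then obtain x where x: "x \<in> XX" "f x = of_int k" "k \<noteq> 0" unfolding N_def by auto
    have "norm (f x) \<ge> 1" using x normk[of k] by (simp; linarith)
    then have "x \<in> K1" unfolding K1_def using x by simp
    then have "norm (f x) \<le> B" using B by blast
    then have "\<bar>real_of_int k\<bar> \<le> B" using x normk by simp
    then show "k \<in> {-\<lceil>B\<rceil>..\<lceil>B\<rceil>}" by (simp; linarith)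
  qed
  then have Nfin: "finite N" by (rule finite_subset) simp
  define V where "V k = {x\<in>XX. f x = of_int k}" for k
  have repV: "rep (V k)" if kN: "k \<in> N" for k
  proof -
    have sub: "V k \<subseteq> XX" unfolding V_def by blast
    have k0: "k \<noteq> 0" using kN unfolding N_def by blast
    obtain T where T: "closed T" "XX \<inter> f -` {of_int k} = XX \<inter> T"
      using continuous_closedin_preimage[OF cont closed_singleton, of "of_int k"] closedin_closed by metis
    have "V k = K1 \<inter> T"
    proof -
      have "norm (of_int k :: complex) \<ge> 1/2" using k0 normk[of k] by (simp; linarith)
      then show ?thesis using T(2) unfolding V_def K1_def by auto
    qed
    then have cV: "compact (V k)" using compact_Int_closed[OF K1c T(1)] by simp
    obtain U where U: "open U" "XX \<inter> f -` ball (of_int k) (1/2) = XX \<inter> U"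
      using continuous_openin_preimage_gen[OF cont open_ball, of "of_int k" "1/2"] openin_open by metis
    have "V k = XX \<inter> f -` ball (of_int k) (1/2)"
    proof (rule set_eqI, rule iffI)
      fix x assume "x \<in> V k" then show "x \<in> XX \<inter> f -` ball (of_int k) (1/2)" unfolding V_def by auto
    next
      fix x assume x: "x \<in> XX \<inter> f -` ball (of_int k) (1/2)"
      then obtain m where m: "f x = of_int m" using int Ints_cases by blast
      have "dist (of_int k :: complex) (of_int m) < 1/2" using x m by simp
      then have "m = k" using int_dist[of k m] by (cases "k = m") auto
      then show "x \<in> V k" using x m unfolding V_def by simp
    qed
    then have eqV: "V k = XX \<inter> U" using U by simp
    show ?thesis by (rule rep_compact_open[OF sub cV U(1) eqV])
  qed
  obtain R where R: "\<And>k. k \<in> N \<Longrightarrow> R k \<in> ring_gen (E`\<Lambda>) \<and> (\<forall>\<psi>\<in>XX. \<psi> (R k) = (if \<psi> \<in> V k then 1 else 0))"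
    using repV unfolding rep_def by metis
  define r where "r = (\<Sum>k\<in>N. real_of_int k *\<^sub>R R k)"
  have rR: "r \<in> ring_gen (E`\<Lambda>)" unfolding r_def
    by (rule ring_gen_sum[OF Nfin]) (use R ring_gen_scale_int in blast)
  have RA: "k \<in> N \<Longrightarrow> R k \<in> AA" for k using R ring_gen_AA by blast
  have "gelfand XX r = f"
  proof
    fix \<psi>
    show "gelfand XX r \<psi> = f \<psi>"
    proof (cases "\<psi> \<in> XX")
      case False then show ?thesis using out unfolding gelfand_def by simp
    next
      case True
      then have ps: "\<psi> \<in> Ch" by (rule XX_Ch)
      have "\<psi> r = (\<Sum>k\<in>N. \<psi> (real_of_int k *\<^sub>R R k))" unfolding r_def
        by (rule Ch_sum[OF ps Nfin]) (use RA AA_scaleR in blast)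
      also have "\<dots> = (\<Sum>k\<in>N. of_int k * (if f \<psi> = of_int k then 1 else 0))"
      proof (rule sum.cong[OF refl])
        fix k assume kN: "k \<in> N"
        have "\<psi> (real_of_int k *\<^sub>R R k) = complex_of_real (real_of_int k) * \<psi> (R k)"
          by (rule Ch_scaleR[OF ps RA[OF kN]])
        then show "\<psi> (real_of_int k *\<^sub>R R k) = of_int k * (if f \<psi> = of_int k then 1 else 0)"
          using R[OF kN] True unfolding V_def by simp
      qed
      also have "\<dots> = f \<psi>"
      proof (cases "f \<psi> = 0")
        case z: True
        have "\<forall>k\<in>N. of_int k * (if f \<psi> = of_int k then 1 else 0) = (0::complex)"
          using z unfolding N_def by auto
        then have "(\<Sum>k\<in>N. of_int k * (if f \<psi> = of_int k then 1 else 0)) = (0::complex)"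
          by (rule sum.neutral)
        then show ?thesis using z by simp
      next
        case False
        obtain m where m: "f \<psi> = of_int m" using int[OF True] Ints_cases by blast
        have "of_int m \<in> f ` XX" using m True by (metis imageI)
        then have mN: "m \<in> N" unfolding N_def using m False by auto
        have "(\<Sum>k\<in>N. of_int k * (if f \<psi> = of_int k then 1 else 0)) = (\<Sum>k\<in>N. if k = m then of_int k else (0::complex))"
          by (rule sum.cong[OF refl]) (simp add: m)
        also have "\<dots> = of_int m" using mN Nfin by (simp add: sum.delta)
        finally show ?thesis using m by simp
      qed
      finally show ?thesis unfolding gelfand_def using True by simp
    qed
  qed
  then show ?thesis using rR by blast
qed

lemma ring_gen_int: "x \<in> ring_gen (E`\<Lambda>) \<Longrightarrow> \<phi> \<in> Ch \<Longrightarrow> \<phi> x \<in> \<int>"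
proof -
  assume x: "x \<in> ring_gen (E`\<Lambda>)" and ph: "\<phi> \<in> Ch"
  have "ring_gen (E`\<Lambda>) \<subseteq> {x\<in>AA. \<forall>\<phi>\<in>Ch. \<phi> x \<in> \<int>}"
  proof (rule ring_gen_min)
    show "E ` \<Lambda> \<subseteq> {x\<in>AA. \<forall>\<phi>\<in>Ch. \<phi> x \<in> \<int>}"
      using E_AA Ch_E by fastforce
    show "0 \<in> {x\<in>AA. \<forall>\<phi>\<in>Ch. \<phi> x \<in> \<int>}"
    proof -
      have "\<forall>\<phi>\<in>Ch. \<phi> 0 \<in> \<int>"
      proof
        fix \<phi> assume "\<phi> \<in> Ch"
        then have "\<phi> 0 = 0" by (rule Ch_0)
        then show "\<phi> 0 \<in> \<int>" by simp
      qed
      then show ?thesis using AA_0 by simp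
    qed
    show "x + y \<in> {x\<in>AA. \<forall>\<phi>\<in>Ch. \<phi> x \<in> \<int>}" if "x \<in> {x\<in>AA. \<forall>\<phi>\<in>Ch. \<phi> x \<in> \<int>}" "y \<in> {x\<in>AA. \<forall>\<phi>\<in>Ch. \<phi> x \<in> \<int>}" for x y
    proof -
      have xA: "x \<in> AA" and yA: "y \<in> AA" and xi: "\<forall>\<phi>\<in>Ch. \<phi> x \<in> \<int>" and yi: "\<forall>\<phi>\<in>Ch. \<phi> y \<in> \<int>" using that by auto
      have "\<forall>\<phi>\<in>Ch. \<phi> (x + y) \<in> \<int>"
      proof
        fix \<phi> assume ph: "\<phi> \<in> Ch"
        then show "\<phi> (x + y) \<in> \<int>" using Ch_add[OF ph xA yA] xi yi by (simp add: Ints_add)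
      qed
      then show ?thesis using AA_add[OF xA yA] by simp
    qed
    show "x * y \<in> {x\<in>AA. \<forall>\<phi>\<in>Ch. \<phi> x \<in> \<int>}" if "x \<in> {x\<in>AA. \<forall>\<phi>\<in>Ch. \<phi> x \<in> \<int>}" "y \<in> {x\<in>AA. \<forall>\<phi>\<in>Ch. \<phi> x \<in> \<int>}" for x y
    proof -
      have xA: "x \<in> AA" and yA: "y \<in> AA" and xi: "\<forall>\<phi>\<in>Ch. \<phi> x \<in> \<int>" and yi: "\<forall>\<phi>\<in>Ch. \<phi> y \<in> \<int>" using that by auto
      have "\<forall>\<phi>\<in>Ch. \<phi> (x * y) \<in> \<int>"
      proof
        fix \<phi> assume ph: "\<phi> \<in> Ch"
        then show "\<phi> (x * y) \<in> \<int>" using Ch_mult[OF ph xA yA] xi yi by (simp add: Ints_mult)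
      qed
      then show ?thesis using AA_mult[OF xA yA] by simp
    qed
    show "- x \<in> {x\<in>AA. \<forall>\<phi>\<in>Ch. \<phi> x \<in> \<int>}" if "x \<in> {x\<in>AA. \<forall>\<phi>\<in>Ch. \<phi> x \<in> \<int>}" for x
    proof -
      have xA: "x \<in> AA" and xi: "\<forall>\<phi>\<in>Ch. \<phi> x \<in> \<int>" using that by auto
      have "\<forall>\<phi>\<in>Ch. \<phi> (- x) \<in> \<int>"
      proof
        fix \<phi> assume ph: "\<phi> \<in> Ch"
        then show "\<phi> (- x) \<in> \<int>" using Ch_minus[OF ph xA] xi by (simp add: Ints_minus)
      qed
      then show ?thesis using AA_minus[OF xA] by simp
    qed
  qed
  then show ?thesis using x ph by blast
qed

lemma coord_cont: "continuous_on UNIV (\<lambda>\<phi>::'a \<Rightarrow> complex. \<phi> x)"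
  by (rule continuous_on_product_coordinates)

lemma Ch_closed: "closed Ch"
proof -
  have "Ch = (\<Inter>x\<in>AA. \<Inter>y\<in>AA. {\<phi>. \<phi> (x + y) = \<phi> x + \<phi> y} \<inter> {\<phi>. \<phi> (x * y) = \<phi> x * \<phi> y})
      \<inter> (\<Inter>a. \<Inter>x\<in>AA. {\<phi>. \<phi> (cs a x) = a * \<phi> x}) \<inter> (\<Inter>x\<in>-AA. {\<phi>. \<phi> x = 0})"
    unfolding Ch_def by auto
  moreover have "closed \<dots>"
    by (intro closed_Int closed_INT ballI closed_Collect_eq continuous_on_add continuous_on_mult
        coord_cont continuous_on_const)
  ultimately show ?thesis by simp
qed

lemma gel_C0:
  assumes x: "x \<in> ring_gen (E`\<Lambda>)"
  shows "gelfand XX x \<in> C0_int XX"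
proof -
  have xA: "x \<in> AA" using x ring_gen_AA by blast
  have "continuous_on XX (gelfand XX x)"
  proof -
    have "continuous_on XX (\<lambda>\<phi>. \<phi> x)" by (rule continuous_on_subset[OF coord_cont]) simp
    then show ?thesis by (rule continuous_on_cong[THEN iffD1, rotated 2]) (auto simp: gelfand_def)
  qed
  moreover have "compact {\<phi>\<in>XX. norm (gelfand XX x \<phi>) \<ge> e}" if e: "e > 0" for e
  proof -
    define B where "B = PiE UNIV (\<lambda>y::'a. cball (0::complex) (norm y))"
    have "compactin (product_topology (\<lambda>_. euclidean) UNIV) B"
      unfolding B_def by (subst compactin_PiE) auto
    then have Bc: "compact B" by (simp add: euclidean_product_topology)
    have ChB: "Ch \<subseteq> B"
    proof
      fix \<phi> assume ph: "\<phi> \<in> Ch"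
      have "\<phi> y \<in> cball 0 (norm y)" for y
        using Ch_norm[OF ph, of y] Ch_out[OF ph, of y] by (cases "y \<in> AA") auto
      then show "\<phi> \<in> B" unfolding B_def by (simp add: PiE_iff)
    qed
    have cl: "closed (Ch \<inter> {\<phi>. e \<le> norm (\<phi> x)})"
      by (intro closed_Int Ch_closed closed_Collect_le continuous_on_const continuous_on_norm coord_cont)
    have "{\<phi>\<in>XX. norm (gelfand XX x \<phi>) \<ge> e} = B \<inter> (Ch \<inter> {\<phi>. e \<le> norm (\<phi> x)})"
    proof (rule set_eqI, rule iffI)
      fix \<phi> assume "\<phi> \<in> {\<phi>\<in>XX. norm (gelfand XX x \<phi>) \<ge> e}"
      then show "\<phi> \<in> B \<inter> (Ch \<inter> {\<phi>. e \<le> norm (\<phi> x)})" using XX_Ch ChB unfolding gelfand_def by auto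
    next
      fix \<phi> assume ph: "\<phi> \<in> B \<inter> (Ch \<inter> {\<phi>. e \<le> norm (\<phi> x)})"
      then have "\<phi> x \<noteq> 0" using e by auto
      then have "\<phi> \<in> XX" unfolding XX_def X_eq using ph xA by blast
      then show "\<phi> \<in> {\<phi>\<in>XX. norm (gelfand XX x \<phi>) \<ge> e}" using ph unfolding gelfand_def by auto
    qed
    then show ?thesis using compact_Int_closed[OF Bc cl] by simp
  qed
  moreover have "\<forall>\<phi>\<in>XX. gelfand XX x \<phi> \<in> \<int>"
    using ring_gen_int[OF x] XX_Ch unfolding gelfand_def by simp
  moreover have "\<forall>\<phi>. \<phi> \<notin> XX \<longrightarrow> gelfand XX x \<phi> = 0" unfolding gelfand_def by simp
  ultimately show ?thesis unfolding C0_int_def by blast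
qed

lemma main1: "C0_int XX = gelfand XX ` ring_gen (E`\<Lambda>)"
  using C0_sub gel_C0 by blast

end

lemma isp_I: "finite F \<Longrightarrow> F \<subseteq> I \<Longrightarrow> (\<Sum>i\<in>F. real_of_int (c i) *\<^sub>R E i) \<in> int_span E I"
  unfolding int_span_def by blast

lemma isp_E: "i \<in> I \<Longrightarrow> E i \<in> int_span E I"
  using isp_I[of "{i}" I "\<lambda>_. 1" E] by simp

lemma isp_0: "0 \<in> int_span E I"
  using isp_I[of "{}" I _ E] by simp

lemma isp_add:
  assumes "x \<in> int_span E I" "y \<in> int_span E I" shows "x + y \<in> int_span E I"
proof -
  obtain F1 c1 where x: "x = (\<Sum>i\<in>F1. real_of_int (c1 i) *\<^sub>R E i)" "finite F1" "F1 \<subseteq> I"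
    using assms(1) unfolding int_span_def by blast
  obtain F2 c2 where y: "y = (\<Sum>i\<in>F2. real_of_int (c2 i) *\<^sub>R E i)" "finite F2" "F2 \<subseteq> I"
    using assms(2) unfolding int_span_def by blast
  define F where "F = F1 \<union> F2"
  define c where "c i = (if i \<in> F1 then c1 i else 0) + (if i \<in> F2 then c2 i else 0)" for i
  have Ff: "finite F" using x y F_def by simp
  have "(\<Sum>i\<in>F. real_of_int (c i) *\<^sub>R E i) = (\<Sum>i\<in>F. (if i \<in> F1 then real_of_int (c1 i) *\<^sub>R E i else 0)) + (\<Sum>i\<in>F. (if i \<in> F2 then real_of_int (c2 i) *\<^sub>R E i else 0))"
    unfolding sum.distrib[symmetric] by (rule sum.cong) (auto simp: c_def scaleR_add_left)
  also have "\<dots> = (\<Sum>i\<in>F \<inter> F1. real_of_int (c1 i) *\<^sub>R E i) + (\<Sum>i\<in>F \<inter> F2. real_of_int (c2 i) *\<^sub>R E i)"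
    using Ff by (simp add: sum.inter_restrict)
  also have "\<dots> = x + y" unfolding x y F_def by (simp add: Int_absorb1)
  finally show ?thesis using isp_I[OF Ff, of I c E] x y F_def by simp
qed

lemma isp_scale:
  assumes "x \<in> int_span E I" shows "real_of_int k *\<^sub>R x \<in> int_span E I"
proof -
  obtain F c where x: "x = (\<Sum>i\<in>F. real_of_int (c i) *\<^sub>R E i)" "finite F" "F \<subseteq> I"
    using assms unfolding int_span_def by blast
  have "real_of_int k *\<^sub>R x = (\<Sum>i\<in>F. real_of_int (k * c i) *\<^sub>R E i)"
    unfolding x by (simp add: scaleR_sum_right)
  then show ?thesis using isp_I[OF x(2,3), of "\<lambda>i. k * c i" E] by simp
qed

lemma isp_uminus: "x \<in> int_span E I \<Longrightarrow> - x \<in> int_span E I"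
  using isp_scale[of x E I "-1"] by simp

lemma isp_sum: "finite S \<Longrightarrow> (\<And>s. s \<in> S \<Longrightarrow> g s \<in> int_span E I) \<Longrightarrow> sum g S \<in> int_span E I"
  by (induction S rule: finite_induct) (auto intro: isp_0 isp_add)

lemma isp_multE:
  fixes E :: "'i \<Rightarrow> 'a::real_algebra"
  assumes cl: "\<forall>i\<in>I. \<forall>j\<in>I. \<exists>k\<in>I. E i * E j = E k"
    and x: "x \<in> int_span E I" and j: "j \<in> I"
  shows "x * E j \<in> int_span E I"
proof -
  obtain F c where xx: "x = (\<Sum>i\<in>F. real_of_int (c i) *\<^sub>R E i)" "finite F" "F \<subseteq> I"
    using x unfolding int_span_def by blast
  have "x * E j = (\<Sum>i\<in>F. real_of_int (c i) *\<^sub>R (E i * E j))"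
    unfolding xx by (simp add: sum_distrib_right)
  also have "\<dots> \<in> int_span E I"
  proof (rule isp_sum[OF xx(2)])
    fix i assume "i \<in> F"
    then have "i \<in> I" using xx by blast
    then obtain k where "k \<in> I" "E i * E j = E k" using cl j by blast
    then show "real_of_int (c i) *\<^sub>R (E i * E j) \<in> int_span E I"
      using isp_scale isp_E by metis
  qed
  finally show ?thesis .
qed

lemma isp_mult:
  fixes E :: "'i \<Rightarrow> 'a::real_algebra"
  assumes cl: "\<forall>i\<in>I. \<forall>j\<in>I. \<exists>k\<in>I. E i * E j = E k"
    and x: "x \<in> int_span E I" and y: "y \<in> int_span E I"
  shows "x * y \<in> int_span E I"
proof -
  obtain F c where yy: "y = (\<Sum>i\<in>F. real_of_int (c i) *\<^sub>R E i)" "finite F" "F \<subseteq> I"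
    using y unfolding int_span_def by blast
  have "x * y = (\<Sum>i\<in>F. real_of_int (c i) *\<^sub>R (x * E i))"
    unfolding yy by (simp add: sum_distrib_left)
  also have "\<dots> \<in> int_span E I"
    by (rule isp_sum[OF yy(2)]) (use isp_scale isp_multE[OF cl x] yy(3) in blast)
  finally show ?thesis .
qed

lemma isp_eq:
  fixes E :: "'i \<Rightarrow> 'a::real_algebra"
  assumes cl: "\<forall>i\<in>I. \<forall>j\<in>I. \<exists>k\<in>I. E i * E j = E k"
  shows "int_span E I = ring_gen (E ` I)"
proof
  show "int_span E I \<subseteq> ring_gen (E ` I)"
  proof
    fix x assume "x \<in> int_span E I"
    then obtain F c where xx: "x = (\<Sum>i\<in>F. real_of_int (c i) *\<^sub>R E i)" "finite F" "F \<subseteq> I"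
      unfolding int_span_def by blast
    show "x \<in> ring_gen (E ` I)" unfolding xx(1)
    proof (rule ring_gen_sum[OF xx(2)])
      fix i assume "i \<in> F"
      then have "i \<in> I" using xx(3) by blast
      then have "E i \<in> ring_gen (E ` I)" by (rule subsetD[OF ring_gen_base imageI])
      then show "real_of_int (c i) *\<^sub>R E i \<in> ring_gen (E ` I)" by (rule ring_gen_scale_int)
    qed
  qed
  show "ring_gen (E ` I) \<subseteq> int_span E I"
    by (rule ring_gen_min) (auto intro: isp_E isp_0 isp_add isp_uminus isp_mult[OF cl])
qed

theorem lemma4p3:
  fixes adj :: "'a::{real_normed_algebra,banach} \<Rightarrow> 'a"
    and cs :: "complex \<Rightarrow> 'a \<Rightarrow> 'a"
    and E :: "'i \<Rightarrow> 'a" and \<Lambda> :: "'i set"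
  assumes "is_cstar_algebra adj cs"
    and "\<forall>i\<in>\<Lambda>. is_projection adj (E i)"
    and "\<forall>i\<in>\<Lambda>. \<forall>j\<in>\<Lambda>. E i * E j = E j * E i"
  defines "A \<equiv> cstar_gen adj cs (E ` \<Lambda>)"
  defines "X \<equiv> characters cs A"
  shows "C0_int X = gelfand X ` ring_gen (E ` \<Lambda>)
     \<and> ((\<forall>i\<in>\<Lambda>. \<forall>j\<in>\<Lambda>. \<exists>k\<in>\<Lambda>. E i * E j = E k)
          \<longrightarrow> C0_int X = gelfand X ` int_span E \<Lambda>)"
proof -
  interpret cst adj cs E \<Lambda> using assms(1,2) by unfold_locales
  have X: "X = XX" unfolding X_def A_def XX_def AA_def ..
  show ?thesis unfolding X using main1 isp_eq by metis
qed
end
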